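(* Let $G=\mathrm{Aut}(\mathbf{K})$ for a Fraïssé structure $\mathbf{K}$ with exhaustion $\bigcup_n\mathbf{A}_n$, and let $Y\subseteq S(G)$ be a subflow. If $T\in\mathcal{F}^Y_m$ and $f\in\mathrm{Emb}(\mathbf{A}_m,\mathbf{A}_n)$, then $f(T)\in\mathcal{F}^Y_n$.
   Context: $\mathbf{K}$ is a countably infinite ultrahomogeneous relational structure, $\mathbf{A}_1\subseteq\mathbf{A}_2\subseteq\cdots$ finite substructures with $|\mathbf{A}_n|=n$ and union $\mathbf{K}$; $G$ has the pointwise convergence topology; $H_n=\mathrm{Emb}(\mathbf{A}_n,\mathbf{K})$; $i^n_m$ is the inclusion $\mathbf{A}_m\to\mathbf{A}_n$. For $f\in\mathrm{Emb}(\mathbf{A}_m,\mathbf{A}_n)$ and $T\subseteq H_m$, $f(T)=\{s\in H_n:s\circ f\in T\}$. $S(G)$ is the inverse limit of the spaces $\beta H_n$ of ultrafilters on $H_n$ along the continuous extensions of $x\mapsto x\circ i^n_m$; write $\alpha(n)$ for the $n$-th coordinate of $\alpha\in S(G)$. The right $G$-action: for $S\subseteq H_m$, $S\in(\alpha g)(m)$ iff $\{x\in H_n:x\circ g|_{\mathbf{A}_m}\in S\}\in\alpha(n)$ for any $n$ with $g(\mathbf{A}_m)\subseteq\mathbf{A}_n$. A subflow is a nonempty closed $G$-invariant subset of $S(G)$. For closed $Y\subseteq S(G)$, $\mathcal{F}^Y_m=\{T\subseteq H_m: T\in\alpha(m)\text{ for all }\alpha\in Y\}$. *)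

theory Defs
  imports "HOL-Analysis.Analysis" "HOL-Library.FuncSet"
begin

text \<open>The structure K lives on the type 'a; its relations are given by R (symbol r holds
of the tuple xs iff R r xs), with arities arity.  Substructures are subsets of 'a with the
induced relations.  Embeddings are represented extensionally (undefined off their domain).\<close>

definition relational_structure :: "('r \<Rightarrow> nat) \<Rightarrow> ('r \<Rightarrow> 'a list \<Rightarrow> bool) \<Rightarrow> bool" where
  "relational_structure arity R \<longleftrightarrow> (\<forall>r xs. R r xs \<longrightarrow> length xs = arity r)"

definition Emb :: "('r \<Rightarrow> 'a list \<Rightarrow> bool) \<Rightarrow> 'a set \<Rightarrow> 'a set \<Rightarrow> ('a \<Rightarrow> 'a) set" where
  "Emb R A B = {f. f \<in> A \<rightarrow>\<^sub>E B \<and> inj_on f A \<and>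
      (\<forall>r xs. set xs \<subseteq> A \<longrightarrow> (R r xs \<longleftrightarrow> R r (map f xs)))}"

definition Aut :: "('r \<Rightarrow> 'a list \<Rightarrow> bool) \<Rightarrow> ('a \<Rightarrow> 'a) set" where
  "Aut R = {g. bij g \<and> (\<forall>r xs. R r xs \<longleftrightarrow> R r (map g xs))}"

definition ultrahomogeneous :: "('r \<Rightarrow> 'a list \<Rightarrow> bool) \<Rightarrow> bool" where
  "ultrahomogeneous R \<longleftrightarrow>
     (\<forall>A f. finite A \<and> f \<in> Emb R A UNIV \<longrightarrow> (\<exists>g\<in>Aut R. \<forall>x\<in>A. g x = f x))"

definition exhaustion :: "(nat \<Rightarrow> 'a set) \<Rightarrow> bool" where
  "exhaustion A \<longleftrightarrow> (\<forall>n\<ge>1. finite (A n) \<and> card (A n) = n \<and> A n \<subseteq> A (Suc n))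
                      \<and> (\<Union>n\<in>{1..}. A n) = UNIV"

definition H :: "('r \<Rightarrow> 'a list \<Rightarrow> bool) \<Rightarrow> (nat \<Rightarrow> 'a set) \<Rightarrow> nat \<Rightarrow> ('a \<Rightarrow> 'a) set" where
  "H R A n = Emb R (A n) UNIV"

definition ultrafilter_on :: "'b set \<Rightarrow> 'b set set \<Rightarrow> bool" where
  "ultrafilter_on X U \<longleftrightarrow> U \<subseteq> Pow X \<and> X \<in> U \<and> {} \<notin> U
     \<and> (\<forall>S T. S \<in> U \<and> S \<subseteq> T \<and> T \<subseteq> X \<longrightarrow> T \<in> U)
     \<and> (\<forall>S\<in>U. \<forall>T\<in>U. S \<inter> T \<in> U)
     \<and> (\<forall>S. S \<subseteq> X \<longrightarrow> S \<in> U \<or> X - S \<in> U)"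

text \<open>Continuous extension \<beta>\<pi> : \<beta>X \<rightarrow> \<beta>Y of a map \<pi> : X \<rightarrow> Y.\<close>
definition beta_map :: "'b set \<Rightarrow> 'c set \<Rightarrow> ('b \<Rightarrow> 'c) \<Rightarrow> 'b set set \<Rightarrow> 'c set set" where
  "beta_map X Y \<pi> U = {S. S \<subseteq> Y \<and> {x\<in>X. \<pi> x \<in> S} \<in> U}"

text \<open>S(G): inverse limit of \<beta>H_n (n \<ge> 1) along \<beta> of x \<mapsto> x \<circ> i^n_m; coordinate 0 unused.\<close>
definition SG :: "('r \<Rightarrow> 'a list \<Rightarrow> bool) \<Rightarrow> (nat \<Rightarrow> 'a set) \<Rightarrow> (nat \<Rightarrow> ('a \<Rightarrow> 'a) set set) set" where
  "SG R A = {\<alpha>. \<alpha> 0 = {} \<and> (\<forall>n\<ge>1. ultrafilter_on (H R A n) (\<alpha> n))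
     \<and> (\<forall>m n. 1 \<le> m \<and> m \<le> n \<longrightarrow>
          \<alpha> m = beta_map (H R A n) (H R A m) (\<lambda>x. restrict x (A m)) (\<alpha> n))}"

definition SG_top :: "('r \<Rightarrow> 'a list \<Rightarrow> bool) \<Rightarrow> (nat \<Rightarrow> 'a set) \<Rightarrow> (nat \<Rightarrow> ('a \<Rightarrow> 'a) set set) topology" where
  "SG_top R A = topology_generated_by
      {{\<alpha>\<in>SG R A. S \<in> \<alpha> m} | m S. 1 \<le> m \<and> S \<subseteq> H R A m}"

text \<open>Right action: S \<in> (\<alpha> g)(m) iff {x \<in> H_n. x \<circ> g|A_m \<in> S} \<in> \<alpha>(n) where g(A_m) \<subseteq> A_n
  (we use the least such n \<ge> 1; the paper notes any such n gives the same result).\<close>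
definition act :: "('r \<Rightarrow> 'a list \<Rightarrow> bool) \<Rightarrow> (nat \<Rightarrow> 'a set) \<Rightarrow> (nat \<Rightarrow> ('a \<Rightarrow> 'a) set set)
     \<Rightarrow> ('a \<Rightarrow> 'a) \<Rightarrow> (nat \<Rightarrow> ('a \<Rightarrow> 'a) set set)" where
  "act R A \<alpha> g = (\<lambda>m. if m = 0 then {} else
     (let n = (LEAST n. 1 \<le> n \<and> g ` A m \<subseteq> A n) in
       {S. S \<subseteq> H R A m \<and> {x \<in> H R A n. restrict (x \<circ> g) (A m) \<in> S} \<in> \<alpha> n}))"

definition subflow :: "('r \<Rightarrow> 'a list \<Rightarrow> bool) \<Rightarrow> (nat \<Rightarrow> 'a set) \<Rightarrow> (nat \<Rightarrow> ('a \<Rightarrow> 'a) set set) set \<Rightarrow> bool" where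
  "subflow R A Y \<longleftrightarrow> Y \<noteq> {} \<and> Y \<subseteq> SG R A \<and> closedin (SG_top R A) Y
     \<and> (\<forall>\<alpha>\<in>Y. \<forall>g\<in>Aut R. act R A \<alpha> g \<in> Y)"

definition F :: "('r \<Rightarrow> 'a list \<Rightarrow> bool) \<Rightarrow> (nat \<Rightarrow> 'a set) \<Rightarrow> (nat \<Rightarrow> ('a \<Rightarrow> 'a) set set) set
     \<Rightarrow> nat \<Rightarrow> ('a \<Rightarrow> 'a) set set" where
  "F R A Y m = {T. T \<subseteq> H R A m \<and> (\<forall>\<alpha>\<in>Y. T \<in> \<alpha> m)}"

definition emb_image :: "('r \<Rightarrow> 'a list \<Rightarrow> bool) \<Rightarrow> (nat \<Rightarrow> 'a set) \<Rightarrow> nat \<Rightarrow> nat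
     \<Rightarrow> ('a \<Rightarrow> 'a) \<Rightarrow> ('a \<Rightarrow> 'a) set \<Rightarrow> ('a \<Rightarrow> 'a) set" where
  "emb_image R A m n f T = {s \<in> H R A n. restrict (s \<circ> f) (A m) \<in> T}"

end

theory Submission
  imports Defs
begin

theorem mainTheorem8:
  fixes R :: "'r \<Rightarrow> 'a list \<Rightarrow> bool" and arity :: "'r \<Rightarrow> nat"
    and A :: "nat \<Rightarrow> 'a set"
    and Y :: "(nat \<Rightarrow> ('a \<Rightarrow> 'a) set set) set"
    and m n :: nat and T :: "('a \<Rightarrow> 'a) set" and f :: "'a \<Rightarrow> 'a"
  assumes "countable (UNIV :: 'a set)" and "infinite (UNIV :: 'a set)"
    and "relational_structure arity R"
    and "ultrahomogeneous R"
    and "exhaustion A"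
    and "subflow R A Y"
    and "1 \<le> m" and "1 \<le> n"
    and "T \<in> F R A Y m"
    and "f \<in> Emb R (A m) (A n)"
  shows "emb_image R A m n f T \<in> F R A Y n"
proof -
  have finA: "finite (A m)" using assms(5,7) unfolding exhaustion_def by blast
  have fE: "f \<in> Emb R (A m) UNIV" using assms(10) unfolding Emb_def by auto
  obtain g where gA: "g \<in> Aut R" and gf: "\<And>x. x \<in> A m \<Longrightarrow> g x = f x"
    using assms(4) finA fE unfolding ultrahomogeneous_def by blast
  have fim: "f ` A m \<subseteq> A n" using assms(10) unfolding Emb_def by auto
  have gim: "g ` A m \<subseteq> A n" using fim gf by auto
  define n' where "n' = (LEAST k. 1 \<le> k \<and> g ` A m \<subseteq> A k)"
  have n'1: "1 \<le> n' \<and> g ` A m \<subseteq> A n'"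
    unfolding n'_def by (rule LeastI[of _ n]) (use assms(8) gim in auto)
  have n'n: "n' \<le> n" unfolding n'_def by (rule Least_le) (use assms(8) gim in auto)
  have "\<forall>\<alpha>\<in>Y. emb_image R A m n f T \<in> \<alpha> n"
  proof
    fix \<alpha> assume aY: "\<alpha> \<in> Y"
    have aS: "\<alpha> \<in> SG R A" using aY assms(6) unfolding subflow_def by blast
    have "act R A \<alpha> g \<in> Y" using aY gA assms(6) unfolding subflow_def by blast
    hence "T \<in> act R A \<alpha> g m" using assms(9) unfolding F_def by blast
    hence Q: "{x \<in> H R A n'. restrict (x \<circ> g) (A m) \<in> T} \<in> \<alpha> n'"
      using assms(7) unfolding act_def n'_def Let_def by auto
    have "\<alpha> n' = beta_map (H R A n) (H R A n') (\<lambda>x. restrict x (A n')) (\<alpha> n)"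
      using aS n'1 n'n unfolding SG_def by blast
    hence P: "{x \<in> H R A n. restrict x (A n') \<in> {x \<in> H R A n'. restrict (x \<circ> g) (A m) \<in> T}} \<in> \<alpha> n"
      using Q unfolding beta_map_def by blast
    have sub: "{x \<in> H R A n. restrict x (A n') \<in> {x \<in> H R A n'. restrict (x \<circ> g) (A m) \<in> T}}
        \<subseteq> emb_image R A m n f T"
    proof
      fix x assume x: "x \<in> {x \<in> H R A n. restrict x (A n') \<in> {x \<in> H R A n'. restrict (x \<circ> g) (A m) \<in> T}}"
      have "restrict (restrict x (A n') \<circ> g) (A m) = restrict (x \<circ> f) (A m)"
        using n'1 gf by (auto simp: restrict_def fun_eq_iff)
      thus "x \<in> emb_image R A m n f T" using x unfolding emb_image_def by auto
    qed
    have uf: "ultrafilter_on (H R A n) (\<alpha> n)" using aS assms(8) unfolding SG_def by blast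
    have "emb_image R A m n f T \<subseteq> H R A n" unfolding emb_image_def by auto
    thus "emb_image R A m n f T \<in> \<alpha> n" using uf P sub unfolding ultrafilter_on_def by blast
  qed
  thus ?thesis unfolding F_def emb_image_def by auto
qed

end
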